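(* Let $j\in\mathbb{N}\cup\{0\}$, $M>0$. Let $\{h_n\}_{n\ge0}$ be the orthonormal Hermite polynomials with respect to $e^{-x^2}$ on $\mathbb{R}$, let $\lambda_n=2n$, $K_n^{(j,j)}(0,0)=\sum_{i=0}^n\big(h_i^{(j)}(0)\big)^2$, and for $n\ge1$ define $$\widetilde\lambda_{j+2n}=\lambda_{j+2n}+M\sum_{i=1}^n(\lambda_{j+2i}-\lambda_{j+2i-2})K_{j+2i-1}^{(j,j)}(0,0).$$ Then: if $j=2r$, $$\lim_{n\to+\infty}\frac{\widetilde\lambda_{2r+2n}}{n^{2r+3/2}}=\frac{M2^{4r+1}}{\pi(r+3/4)(2r+1/2)};$$ if $j=2r+1$, $$\lim_{n\to+\infty}\frac{\widetilde\lambda_{2r+1+2n}}{n^{2r+5/2}}=\frac{M2^{4r+3}}{\pi(r+5/4)(2r+3/2)}.$$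
   Context: Background: $\lambda_n=2n$ are the eigenvalues of the Hermite equation $-y''+2xy'=2ny$, and $\widetilde\lambda_{j+2n}$ are eigenvalues of the differential operator $\mathbf{L}$ having as eigenfunctions the polynomials orthonormal with respect to $(f,g)=\int_{\mathbb{R}} fg\,e^{-x^2}dx+Mf^{(j)}(0)g^{(j)}(0)$. *)

theory Defs
  imports "HOL-Analysis.Analysis" "HOL-Computational_Algebra.Polynomial"
begin

fun hermite_poly :: "nat \<Rightarrow> real poly" where
  "hermite_poly 0 = 1"
| "hermite_poly (Suc 0) = [:0, 2:]"
| "hermite_poly (Suc (Suc n)) =
     [:0, 2:] * hermite_poly (Suc n) - smult (2 * real (Suc n)) (hermite_poly n)"

text \<open>Orthonormal Hermite polynomials w.r.t. exp(-x^2) on the real line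
  (positive leading coefficient): h_n = H_n / sqrt(2^n n! sqrt pi).\<close>
definition orthonormal_hermite :: "nat \<Rightarrow> real poly" where
  "orthonormal_hermite n =
     smult (1 / sqrt (2 ^ n * fact n * sqrt pi)) (hermite_poly n)"

definition hermite_lambda :: "nat \<Rightarrow> real" where
  "hermite_lambda n = 2 * real n"

definition kernel_jj0 :: "nat \<Rightarrow> nat \<Rightarrow> real" where
  "kernel_jj0 j n = (\<Sum>i = 0..n. (poly ((pderiv ^^ j) (orthonormal_hermite i)) 0) ^ 2)"

definition tilde_lambda :: "real \<Rightarrow> nat \<Rightarrow> nat \<Rightarrow> real" where
  "tilde_lambda M j n = hermite_lambda (j + 2 * n)
     + M * (\<Sum>i = 1..n. (hermite_lambda (j + 2 * i) - hermite_lambda (j + 2 * i - 2))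
                          * kernel_jj0 j (j + 2 * i - 1))"

end

theory Submission
  imports Defs "HOL-Real_Asymp.Real_Asymp"
begin


lemma aux0:
  assumes h: "(Q::real poly) = X - smult (2*real n) R"
  shows "smult (2*real(Suc n)) X + smult 2 Q - smult (2*real (Suc n)) (smult (2*real n) R) = smult (2*real (Suc (Suc n))) Q"
  unfolding h by (simp add: poly_eq_iff algebra_simps)

lemma aux:
  assumes h: "(Q::real poly) = A * P - smult (2*real n) R"
  shows "A * smult (2*real(Suc n)) P + smult 2 Q - smult (2*real (Suc n)) (smult (2*real n) R) = smult (2*real (Suc (Suc n))) Q"
  using aux0[OF h] by (simp only: mult_smult_right)

lemma pderiv_hermite: "pderiv (hermite_poly n) = smult (2 * real n) (hermite_poly (n - 1))"
proof (induction n rule: hermite_poly.induct)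
  case 1 then show ?case by simp
next
  case 2 then show ?case by (simp add: pderiv_pCons)
next
  case (3 n)
  have d: "pderiv [:0, 2::real:] = [:2:]" by (simp add: pderiv_pCons)
  show ?case
  proof (cases n)
    case 0
    then show ?thesis by (simp add: pderiv_diff pderiv_mult pderiv_smult d pderiv_pCons algebra_simps)
  next
    case (Suc m)
    have h: "hermite_poly (Suc n) = [:0, 2:] * hermite_poly n - smult (2 * real n) (hermite_poly m)"
      using Suc by simp
    have "pderiv (hermite_poly (Suc (Suc n))) = [:0, 2:] * pderiv (hermite_poly (Suc n)) + hermite_poly (Suc n) * [:2:] - smult (2*real(Suc n)) (pderiv (hermite_poly n))"
      by (simp only: hermite_poly.simps(3) pderiv_diff pderiv_mult pderiv_smult d)
    also have "\<dots> = [:0, 2:] * smult (2*real(Suc n)) (hermite_poly n) + hermite_poly (Suc n) * [:2:] - smult (2*real(Suc n)) (smult (2 * real n) (hermite_poly m))"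
      using 3 Suc by simp
    also have "\<dots> = [:0, 2:] * smult (2*real(Suc n)) (hermite_poly n) + smult 2 (hermite_poly (Suc n)) - smult (2*real(Suc n)) (smult (2 * real n) (hermite_poly m))"
      by (simp only: mult_pCons_right) simp
    also have "\<dots> = smult (2 * real (Suc (Suc n))) (hermite_poly (Suc n))"
      by (rule aux[OF h])
    finally show ?thesis by simp
  qed
qed

lemma funpow_pderiv_smult: "(pderiv ^^ j) (smult c p) = smult c ((pderiv ^^ j) p)"
  by (induction j) (simp_all add: pderiv_smult)

lemma funpow_pderiv_hermite:
  "(pderiv ^^ j) (hermite_poly i) = smult (\<Prod>t<j. 2 * real (i - t)) (hermite_poly (i - j))"
proof (induction j)
  case 0 then show ?case by simp
next
  case (Suc j)
  show ?case
  proof (cases "i - j")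
    case 0
    then have "i - Suc j = 0" by simp
    then show ?thesis using Suc 0 by (simp add: pderiv_smult)
  next
    case (Suc m)
    then have "i - Suc j = m" by simp
    moreover have "2 + 2*real m = 2*real i - 2*real j" using Suc by (simp add: of_nat_diff)
    ultimately show ?thesis using Suc.IH Suc by (simp add: pderiv_smult pderiv_hermite)
  qed
qed

lemma hermite_odd0: "poly (hermite_poly (Suc (2 * k))) 0 = 0"
proof (induction k)
  case 0 then show ?case by simp
next
  case (Suc k)
  have "Suc (2 * Suc k) = Suc (Suc (Suc (2 * k)))" by simp
  then show ?case using Suc by (simp only:) simp
qed

definition cb :: "nat \<Rightarrow> real" where "cb k = ((real k - 1/2) gchoose k)"

lemma cb_Suc: "cb (Suc k) = cb k * ((real k + 1/2) / (real k + 1))"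
proof -
  have "cb (Suc k) = (((real k - 1/2) + 1) gchoose (Suc k))" unfolding cb_def by (simp add: algebra_simps)
  also have "\<dots> = cb k * ((real k - 1/2 + 1) / of_nat (Suc k))" unfolding cb_def by (rule gbinomial_rec)
  finally show ?thesis by (simp add: algebra_simps)
qed

lemma hermite_even0: "poly (hermite_poly (2 * k)) 0 ^ 2 = 4 ^ k * cb k * fact (2 * k)"
proof (induction k)
  case 0 then show ?case by (simp add: cb_def)
next
  case (Suc k)
  have e: "2 * Suc k = Suc (Suc (2 * k))" by simp
  have "poly (hermite_poly (2 * Suc k)) 0 = - (2 * real (Suc (2 * k))) * poly (hermite_poly (2 * k)) 0"
    by (simp only: e) (simp add: algebra_simps)
  then have "poly (hermite_poly (2 * Suc k)) 0 ^ 2 = 4 * real (Suc (2 * k)) ^ 2 * poly (hermite_poly (2 * k)) 0 ^ 2"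
    by (simp add: power_mult_distrib power2_eq_square algebra_simps)
  also have "\<dots> = 4 * real (Suc (2 * k)) ^ 2 * (4 ^ k * cb k * fact (2 * k))" using Suc by simp
  also have "\<dots> = 4 ^ Suc k * cb (Suc k) * fact (2 * Suc k)"
    by (simp only: e cb_Suc fact_Suc) (simp add: field_simps power2_eq_square)
  finally show ?case .
qed



definition Q :: "nat \<Rightarrow> nat \<Rightarrow> real" where "Q j k = (\<Prod>t<j. real (j + 2 * k - t))"

lemma Q_fact_gen: "(\<Prod>t<j. real (j + m - t)) * fact m = fact (j + m)"
proof (induction j)
  case 0 then show ?case by simp
next
  case (Suc j)
  have "(\<Prod>t<Suc j. real (Suc j + m - t)) = real (Suc j + m) * (\<Prod>t<j. real (j + m - t))"
    by (subst prod.lessThan_Suc_shift) simp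
  then have "(\<Prod>t<Suc j. real (Suc j + m - t)) * fact m = real (Suc j + m) * ((\<Prod>t<j. real (j + m - t)) * fact m)"
    by (simp only: mult.assoc)
  also have "\<dots> = real (Suc j + m) * fact (j + m)" using Suc by (simp only:)
  also have "\<dots> = fact (Suc j + m)" by simp
  finally show ?case .
qed

lemma Q_fact: "Q j k * fact (2 * k) = fact (j + 2 * k)"
  unfolding Q_def by (rule Q_fact_gen)

lemma Q_pos: "Q j k > 0"
  unfolding Q_def by (intro prod_pos) auto

lemma T_odd: "poly ((pderiv ^^ j) (orthonormal_hermite (j + 2 * k + 1))) 0 = 0"
proof -
  have "j + 2 * k + 1 - j = Suc (2 * k)" by simp
  then show ?thesis
    unfolding orthonormal_hermite_def funpow_pderiv_smult funpow_pderiv_hermite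
    by (simp add: hermite_odd0)
qed

lemma T_even: "poly ((pderiv ^^ j) (orthonormal_hermite (j + 2 * k))) 0 ^ 2 = 2 ^ j * Q j k * cb k / sqrt pi"
proof -
  define i where "i = j + 2 * k"
  define H where "H = poly (hermite_poly (2 * k)) 0"
  have P: "(\<Prod>t<j. 2 * real (i - t)) = 2 ^ j * Q j k"
    unfolding Q_def i_def by (simp only: prod.distrib prod_constant card_lessThan)
  have ij: "i - j = 2 * k" unfolding i_def by simp
  have pos: "2 ^ i * fact i * sqrt pi > (0::real)" by simp
  have "poly ((pderiv ^^ j) (orthonormal_hermite i)) 0 = 1 / sqrt (2 ^ i * fact i * sqrt pi) * (2 ^ j * Q j k) * H"
    unfolding orthonormal_hermite_def funpow_pderiv_smult funpow_pderiv_hermite ij P H_def by simp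
  then have "poly ((pderiv ^^ j) (orthonormal_hermite i)) 0 ^ 2 = (2 ^ j * Q j k) ^ 2 * H ^ 2 / (2 ^ i * fact i * sqrt pi)"
    using pos by (simp add: power_mult_distrib power_divide real_sqrt_pow2)
  also have "H ^ 2 = 4 ^ k * cb k * fact (2 * k)" unfolding H_def by (rule hermite_even0)
  also have "fact i = Q j k * fact (2 * k)" unfolding i_def by (simp add: Q_fact)
  also have "(2::real) ^ i = 2 ^ j * 4 ^ k" unfolding i_def by (simp add: power_add power_mult)
  finally show ?thesis
    using Q_pos[of j k] unfolding i_def by (simp add: field_simps power2_eq_square)
qed



lemma cb_lim: "(\<lambda>k. cb k * sqrt (real k)) \<longlonglongrightarrow> 1 / sqrt pi"
proof -
  have g: "(\<lambda>n. ((-1/2 + real n) gchoose n) * exp (-(-1/2) * ln (real n))) \<longlonglongrightarrow> rGamma (-1/2 + 1 :: real)"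
    using Gamma_gbinomial[of "-1/2 :: real"] by simp
  have r: "rGamma (-1/2 + 1 :: real) = 1 / sqrt pi"
  proof -
    have h: "(-1/2 + 1 :: real) = 1/2" by simp
    have "rGamma (1/2 :: real) = inverse (Gamma (1/2))" unfolding rGamma_inverse_Gamma ..
    also have "\<dots> = 1 / sqrt pi" unfolding Gamma_one_half_real by (rule inverse_eq_divide)
    finally show ?thesis unfolding h .
  qed
  show ?thesis
  proof (rule Lim_transform_eventually[OF g[unfolded r]])
    show "\<forall>\<^sub>F n in sequentially. ((-1/2 + real n) gchoose n) * exp (-(-1/2) * ln (real n)) = cb n * sqrt (real n)"
      using eventually_gt_at_top[of "0::nat"]
    proof eventually_elim
      case (elim n)
      have "sqrt (real n) = real n powr (1/2)" by (simp add: powr_half_sqrt)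
      also have "\<dots> = exp (1/2 * ln (real n))" using elim by (simp add: powr_def)
      finally show ?case by (simp add: cb_def algebra_simps)
    qed
  qed
qed

lemma lin_lim: "(\<lambda>k::nat. (c + 2 * real k) / real k) \<longlonglongrightarrow> 2"
  by real_asymp

lemma Q_lim: "(\<lambda>k. Q j k / real k ^ j) \<longlonglongrightarrow> 2 ^ j"
proof -
  have "(\<lambda>k. \<Prod>t<j. real (j + 2 * k - t) / real k) \<longlonglongrightarrow> (\<Prod>t<j. 2::real)"
  proof (rule tendsto_prod)
    fix t assume "t \<in> {..<j}"
    then have "\<And>k. real (j + 2 * k - t) = real (j - t) + 2 * real k" by auto
    then show "(\<lambda>k. real (j + 2 * k - t) / real k) \<longlonglongrightarrow> 2" using lin_lim[of "real (j - t)"] by simp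
  qed
  moreover have "(\<lambda>k. \<Prod>t<j. real (j + 2 * k - t) / real k) = (\<lambda>k. Q j k / real k ^ j)"
    unfolding Q_def by (simp add: prod_dividef)
  ultimately show ?thesis by simp
qed

lemma T_lim: "(\<lambda>k. (2 ^ j * Q j k * cb k / sqrt pi) / real k powr (real j - 1/2)) \<longlonglongrightarrow> 4 ^ j / pi"
proof -
  have "(\<lambda>k. 2 ^ j / sqrt pi * (Q j k / real k ^ j) * (cb k * sqrt (real k))) \<longlonglongrightarrow> 2 ^ j / sqrt pi * 2 ^ j * (1 / sqrt pi)"
    by (intro tendsto_mult tendsto_const Q_lim cb_lim)
  also have "2 ^ j / sqrt pi * 2 ^ j * (1 / sqrt pi) = (4::real) ^ j / pi"
  proof -
    have "(2::real) ^ j * 2 ^ j = 4 ^ j" by (simp flip: power_mult_distrib)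
    moreover have "sqrt pi * sqrt pi = pi" by simp
    ultimately show ?thesis by (simp add: field_simps)
  qed
  finally have L: "(\<lambda>k. 2 ^ j / sqrt pi * (Q j k / real k ^ j) * (cb k * sqrt (real k))) \<longlonglongrightarrow> 4 ^ j / pi" .
  show ?thesis
  proof (rule Lim_transform_eventually[OF L])
    show "\<forall>\<^sub>F k in sequentially. 2 ^ j / sqrt pi * (Q j k / real k ^ j) * (cb k * sqrt (real k)) = (2 ^ j * Q j k * cb k / sqrt pi) / real k powr (real j - 1/2)"
      using eventually_gt_at_top[of "0::nat"]
    proof eventually_elim
      case (elim k)
      have "real k powr (real j - 1/2) = real k ^ j / sqrt (real k)"
        using elim by (simp add: powr_diff powr_realpow powr_half_sqrt)
      then show ?case using elim by (simp add: field_simps)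
    qed
  qed
qed

lemma stolz:
  fixes a b :: "nat \<Rightarrow> real"
  assumes mono: "\<And>n. b n < b (Suc n)"
    and lim_b: "filterlim b at_top sequentially"
    and lim: "(\<lambda>n. (a (Suc n) - a n) / (b (Suc n) - b n)) \<longlonglongrightarrow> L"
  shows "(\<lambda>n. a n / b n) \<longlonglongrightarrow> L"
proof (rule tendstoI)
  fix e :: real assume e: "e > 0"
  from tendstoD[OF lim, of "e/2"] e obtain N1 where
    N1: "\<And>n. n \<ge> N1 \<Longrightarrow> dist ((a (Suc n) - a n) / (b (Suc n) - b n)) L < e/2"
    by (auto simp: eventually_sequentially)
  define N where "N = N1"
  have step: "\<bar>a (Suc n) - a n - L * (b (Suc n) - b n)\<bar> \<le> e/2 * (b (Suc n) - b n)" if "n \<ge> N" for n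
  proof -
    have d: "b (Suc n) - b n > 0" using mono[of n] that by (simp add: N_def)
    have "\<bar>(a (Suc n) - a n) / (b (Suc n) - b n) - L\<bar> < e/2" using N1[of n] that by (simp add: N_def dist_real_def)
    then have "\<bar>(a (Suc n) - a n - L * (b (Suc n) - b n)) / (b (Suc n) - b n)\<bar> < e/2"
      using d by (simp add: diff_divide_distrib)
    then have "\<bar>a (Suc n) - a n - L * (b (Suc n) - b n)\<bar> / (b (Suc n) - b n) < e/2"
      using d by (simp add: abs_divide)
    then show ?thesis using d by (simp add: divide_less_eq)
  qed
  have key: "\<bar>a (N + m) - a N - L * (b (N + m) - b N)\<bar> \<le> e/2 * (b (N + m) - b N)" for m
  proof (induction m)
    case 0 then show ?case by simp
  next
    case (Suc m)
    have "\<bar>a (Suc (N + m)) - a (N + m) - L * (b (Suc (N + m)) - b (N + m))\<bar> \<le> e/2 * (b (Suc (N + m)) - b (N + m))"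
      by (rule step) simp
    moreover have "a (Suc (N + m)) - a N - L * (b (Suc (N + m)) - b N) = (a (Suc (N + m)) - a (N + m) - L * (b (Suc (N + m)) - b (N + m))) + (a (N + m) - a N - L * (b (N + m) - b N))"
      by (simp add: algebra_simps)
    moreover have "e/2 * (b (Suc (N + m)) - b N) = e/2 * (b (Suc (N + m)) - b (N + m)) + e/2 * (b (N + m) - b N)"
      by (simp add: algebra_simps)
    ultimately show ?case using Suc.IH abs_triangle_ineq[of "a (Suc (N + m)) - a (N + m) - L * (b (Suc (N + m)) - b (N + m))" "a (N + m) - a N - L * (b (N + m) - b N)"]
      by (simp only: add_Suc_right)
  qed
  define C where "C = \<bar>a N - L * b N\<bar> + e/2 * \<bar>b N\<bar>"
  have C: "C \<ge> 0" unfolding C_def using e by simp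
  have ev: "\<forall>\<^sub>F n in sequentially. b n \<ge> 2 * C / e + 1"
    using lim_b by (simp add: filterlim_at_top)
  show "\<forall>\<^sub>F n in sequentially. dist (a n / b n) L < e"
    using ev eventually_ge_at_top[of N]
  proof eventually_elim
    case (elim n)
    then obtain m where m: "n = N + m" using le_Suc_ex by blast
    have bpos: "b n > 0" using elim C e by (smt (verit) divide_nonneg_pos)
    have h1: "\<bar>a n - L * b n\<bar> \<le> \<bar>a n - a N - L * (b n - b N)\<bar> + \<bar>a N - L * b N\<bar>"
      using abs_triangle_ineq[of "a n - a N - L * (b n - b N)" "a N - L * b N"] by (simp add: algebra_simps)
    have h2: "e/2 * (b n - b N) = e/2 * b n - e/2 * b N" by (rule right_diff_distrib)
    have h3: "e/2 * (- b N) \<le> e/2 * \<bar>b N\<bar>" using e by (intro mult_left_mono) auto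
    have "\<bar>a n - L * b n\<bar> \<le> C + e/2 * b n"
      using key[of m] h1 h2 h3 unfolding C_def m[symmetric] by linarith
    moreover have "C < e/2 * b n"
    proof -
      have "2 * C / e < b n" using elim by linarith
      then have "2 * C < b n * e" using e by (simp add: divide_less_eq)
      then show ?thesis by (simp add: mult.commute)
    qed
    ultimately have "\<bar>a n - L * b n\<bar> < e * b n" by linarith
    then have "\<bar>a n - L * b n\<bar> / b n < e" using bpos by (simp add: divide_less_eq)
    moreover have "a n / b n - L = (a n - L * b n) / b n" using bpos by (simp add: field_simps)
    ultimately show ?case using bpos by (simp add: dist_real_def abs_divide)
  qed
qed



lemma ra1: "p > 0 \<Longrightarrow> filterlim (\<lambda>i::nat. real i powr p) at_top sequentially"
  by real_asymp

lemma ra2: "p > 0 \<Longrightarrow> (\<lambda>i::nat. real i powr (p - 1) / (real (Suc i) powr p - real i powr p)) \<longlonglongrightarrow> inverse p"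
  by real_asymp

lemma ra3: "p > 0 \<Longrightarrow> (\<lambda>i::nat. real (Suc i) powr (p - 1) / (real (Suc i) powr p - real i powr p)) \<longlonglongrightarrow> inverse p"
  by real_asymp

lemma ra4: "p > 1 \<Longrightarrow> (\<lambda>i::nat. (c + 4 * real i) / real i powr p) \<longlonglongrightarrow> 0"
  by real_asymp


definition K :: "nat \<Rightarrow> nat \<Rightarrow> real" where "K j i = kernel_jj0 j (j + 2 * i - 1)"

lemma K_diff:
  assumes "i \<ge> 1"
  shows "K j (Suc i) - K j i = 2 ^ j * Q j i * cb i / sqrt pi"
proof -
  have e: "j + 2 * Suc i - 1 = Suc (Suc (j + 2 * i - 1))" using assms by simp
  have e2: "Suc (j + 2 * i - 1) = j + 2 * i" using assms by simp
  define f where "f t = poly ((pderiv ^^ j) (orthonormal_hermite t)) 0 ^ 2" for t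
  have "K j (Suc i) = (\<Sum>t = 0..j + 2 * i - 1. f t) + f (j + 2 * i) + f (Suc (j + 2 * i))"
  proof -
    have s1: "(\<Sum>t = 0..j + 2 * i. f t) = (\<Sum>t = 0..j + 2 * i - 1. f t) + f (j + 2 * i)"
      using sum.atLeast0_atMost_Suc[of f "j + 2 * i - 1"] unfolding e2 .
    have "K j (Suc i) = (\<Sum>t = 0..Suc (j + 2 * i). f t)"
      unfolding K_def kernel_jj0_def e e2 f_def ..
    then show ?thesis using sum.atLeast0_atMost_Suc[of f "j + 2 * i"] s1 by simp
  qed
  moreover have "K j i = (\<Sum>t = 0..j + 2 * i - 1. f t)" unfolding K_def kernel_jj0_def f_def ..
  ultimately show ?thesis
    using T_odd[of j i] T_even[of j i] unfolding f_def by simp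
qed

lemma K_lim: "(\<lambda>i. K j i / real i powr (real j + 1/2)) \<longlonglongrightarrow> 4 ^ j / pi * inverse (real j + 1/2)"
proof (rule stolz)
  show "real n powr (real j + 1/2) < real (Suc n) powr (real j + 1/2)" for n
    by (rule powr_less_mono2) auto
  show "filterlim (\<lambda>i. real i powr (real j + 1/2)) at_top sequentially"
    by (rule ra1) simp
  have L: "(\<lambda>i. ((2 ^ j * Q j i * cb i / sqrt pi) / real i powr (real j - 1/2)) *
       (real i powr (real j + 1/2 - 1) / (real (Suc i) powr (real j + 1/2) - real i powr (real j + 1/2))))
      \<longlonglongrightarrow> 4 ^ j / pi * inverse (real j + 1/2)"
    by (intro tendsto_mult T_lim ra2) simp
  show "(\<lambda>n. (K j (Suc n) - K j n) / (real (Suc n) powr (real j + 1 / 2) - real n powr (real j + 1 / 2)))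
      \<longlonglongrightarrow> 4 ^ j / pi * inverse (real j + 1 / 2)"
  proof (rule Lim_transform_eventually[OF L])
    show "\<forall>\<^sub>F i in sequentially. ((2 ^ j * Q j i * cb i / sqrt pi) / real i powr (real j - 1/2)) *
       (real i powr (real j + 1/2 - 1) / (real (Suc i) powr (real j + 1/2) - real i powr (real j + 1/2))) =
       (K j (Suc i) - K j i) / (real (Suc i) powr (real j + 1 / 2) - real i powr (real j + 1 / 2))"
      using eventually_ge_at_top[of "1::nat"]
    proof eventually_elim
      case (elim i)
      have ex: "real j + 1/2 - 1 = real j - 1/2" by simp
      have nz: "real i powr (real j - 1/2) \<noteq> 0" using elim by simp
      show ?case unfolding K_diff[OF elim] ex using nz by simp
    qed
  qed
qed

definition S :: "nat \<Rightarrow> nat \<Rightarrow> real" where "S j n = (\<Sum>i = 1..n. 4 * K j i)"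

lemma S_lim: "(\<lambda>n. S j n / real n powr (real j + 3/2)) \<longlonglongrightarrow> 4 * (4 ^ j / pi * inverse (real j + 1/2)) * inverse (real j + 3/2)"
proof (rule stolz)
  show "real n powr (real j + 3/2) < real (Suc n) powr (real j + 3/2)" for n
    by (rule powr_less_mono2) auto
  show "filterlim (\<lambda>i. real i powr (real j + 3/2)) at_top sequentially"
    by (rule ra1) simp
  have L: "(\<lambda>n. 4 * (K j (Suc n) / real (Suc n) powr (real j + 1/2)) *
       (real (Suc n) powr (real j + 3/2 - 1) / (real (Suc n) powr (real j + 3/2) - real n powr (real j + 3/2))))
      \<longlonglongrightarrow> 4 * (4 ^ j / pi * inverse (real j + 1/2)) * inverse (real j + 3/2)"
    by (intro tendsto_mult tendsto_const ra3 LIMSEQ_Suc[OF K_lim]) simp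
  show "(\<lambda>n. (S j (Suc n) - S j n) / (real (Suc n) powr (real j + 3/2) - real n powr (real j + 3/2)))
      \<longlonglongrightarrow> 4 * (4 ^ j / pi * inverse (real j + 1/2)) * inverse (real j + 3/2)"
  proof (rule Lim_transform_eventually[OF L], rule always_eventually, rule allI)
    fix n
    have ex: "real j + 3/2 - 1 = real j + 1/2" by simp
    have d: "S j (Suc n) - S j n = 4 * K j (Suc n)" unfolding S_def by simp
    have nz: "real (Suc n) powr (real j + 1/2) \<noteq> 0" by simp
    show "4 * (K j (Suc n) / real (Suc n) powr (real j + 1/2)) *
       (real (Suc n) powr (real j + 3/2 - 1) / (real (Suc n) powr (real j + 3/2) - real n powr (real j + 3/2))) =
       (S j (Suc n) - S j n) / (real (Suc n) powr (real j + 3/2) - real n powr (real j + 3/2))"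
      unfolding d ex using nz by simp
  qed
qed

lemma tilde_eq: "tilde_lambda M j n = 2 * real (j + 2 * n) + M * S j n"
proof -
  have "(\<Sum>i = 1..n. (hermite_lambda (j + 2 * i) - hermite_lambda (j + 2 * i - 2)) * kernel_jj0 j (j + 2 * i - 1))
      = (\<Sum>i = 1..n. 4 * K j i)"
  proof (rule sum.cong)
    fix i assume "i \<in> {1..n}"
    then have "hermite_lambda (j + 2 * i) - hermite_lambda (j + 2 * i - 2) = 4"
      unfolding hermite_lambda_def by (simp add: of_nat_diff)
    then show "(hermite_lambda (j + 2 * i) - hermite_lambda (j + 2 * i - 2)) * kernel_jj0 j (j + 2 * i - 1) = 4 * K j i"
      unfolding K_def by simp
  qed simp
  then show ?thesis unfolding tilde_lambda_def S_def hermite_lambda_def by simp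
qed

lemma general_lim: "(\<lambda>n. tilde_lambda M j n / real n powr (real j + 3/2))
   \<longlonglongrightarrow> M * (4 * (4 ^ j / pi * inverse (real j + 1/2)) * inverse (real j + 3/2))"
proof -
  have "(\<lambda>n. (2 * real j + 4 * real n) / real n powr (real j + 3/2) + M * (S j n / real n powr (real j + 3/2)))
     \<longlonglongrightarrow> 0 + M * (4 * (4 ^ j / pi * inverse (real j + 1/2)) * inverse (real j + 3/2))"
    by (intro tendsto_add tendsto_mult tendsto_const ra4 S_lim) simp
  then show ?thesis unfolding tilde_eq by (simp add: add_divide_distrib algebra_simps)
qed


theorem mainTheorem7:
  fixes j :: nat and M :: real
  assumes "M > 0"
  shows "(\<forall>r. j = 2 * r \<longrightarrow>
            ((\<lambda>n. tilde_lambda M j n / real n powr (2 * real r + 3 / 2))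
              \<longlongrightarrow> M * 2 ^ (4 * r + 1) / (pi * (real r + 3 / 4) * (2 * real r + 1 / 2))) sequentially)
       \<and> (\<forall>r. j = 2 * r + 1 \<longrightarrow>
            ((\<lambda>n. tilde_lambda M j n / real n powr (2 * real r + 5 / 2))
              \<longlongrightarrow> M * 2 ^ (4 * r + 3) / (pi * (real r + 5 / 4) * (2 * real r + 3 / 2))) sequentially)"
proof (intro conjI allI impI)
  fix r assume j: "j = 2 * r"
  have e1: "real j + 3/2 = 2 * real r + 3/2" using j by simp
  have p: "(4::real) ^ j = 2 ^ (4 * r)" using j by (simp add: power_mult)
  have e2: "M * (4 * (4 ^ j / pi * inverse (real j + 1/2)) * inverse (real j + 3/2))
      = M * 2 ^ (4 * r + 1) / (pi * (real r + 3 / 4) * (2 * real r + 1 / 2))"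
    unfolding p using j pi_gt_zero by (simp add: field_simps power_add)
  have G: "((\<lambda>n. tilde_lambda M j n / real n powr (real j + 3/2))
              \<longlongrightarrow> M * 2 ^ (4 * r + 1) / (pi * (real r + 3 / 4) * (2 * real r + 1 / 2))) sequentially"
    using general_lim[of M j] by (simp only: e2)
  then show "((\<lambda>n. tilde_lambda M j n / real n powr (2 * real r + 3 / 2))
              \<longlongrightarrow> M * 2 ^ (4 * r + 1) / (pi * (real r + 3 / 4) * (2 * real r + 1 / 2))) sequentially"
    by (simp only: e1)
next
  fix r assume j: "j = 2 * r + 1"
  have e1: "real j + 3/2 = 2 * real r + 5/2" using j by simp
  have p: "(4::real) ^ j = 2 ^ (4 * r) * 4" using j by (simp add: power_mult)
  have e2: "M * (4 * (4 ^ j / pi * inverse (real j + 1/2)) * inverse (real j + 3/2))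
      = M * 2 ^ (4 * r + 3) / (pi * (real r + 5 / 4) * (2 * real r + 3 / 2))"
    unfolding p using j pi_gt_zero by (simp add: field_simps power_add)
  have G: "((\<lambda>n. tilde_lambda M j n / real n powr (real j + 3/2))
              \<longlongrightarrow> M * 2 ^ (4 * r + 3) / (pi * (real r + 5 / 4) * (2 * real r + 3 / 2))) sequentially"
    using general_lim[of M j] by (simp only: e2)
  then show "((\<lambda>n. tilde_lambda M j n / real n powr (2 * real r + 5 / 2))
              \<longlongrightarrow> M * 2 ^ (4 * r + 3) / (pi * (real r + 5 / 4) * (2 * real r + 3 / 2))) sequentially"
    by (simp only: e1)
qed

end
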